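(* In the setting below, for all $j\in\mathcal{S}$ and all $x\in\mathbb{R}^{|\mathcal{S}|}$, if $\|(\mathrm{Id}-B_j)x\|=\|x\|$ then $x\in\operatorname{span}(M^{1/2}_{:,j})^\perp$.
   Context: Setting: $f:\mathbb{R}^p\to\mathbb{R}$ convex, differentiable with Lipschitz gradient; $g_j:\mathbb{R}\to\mathbb{R}\cup\{+\infty\}$ proper closed convex; $x^\star$ a minimizer of $f(x)+\sum_jg_j(x_j)$; $\mathcal{S}=\{j:\partial g_j(x^\star_j)\text{ is a singleton}\}$; $g_j$ is $\mathcal{C}^2$ near $x^\star_j$ for $j\in\mathcal{S}$, $f$ is $\mathcal{C}^2$ near $x^\star$, and $\nabla^2_{\mathcal{S},\mathcal{S}}f(x^\star)\succ0$. Step sizes $0<\gamma_j\le1/L_j$, $L_j$ the coordinatewise Lipschitz constant of $\nabla_jf$. For $j\in\mathcal{S}$, $z^\star_j=x^\star_j-\gamma_j\nabla_jf(x^\star)$, $p_j>0$ the derivative of $\operatorname{prox}_{\gamma_jg_j}$ at $z^\star_j$, $u_j=\frac1{\gamma_jp_j}-\frac1{\gamma_j}$, $M=\nabla^2_{\mathcal{S},\mathcal{S}}f(x^\star)+\operatorname{diag}(u)$ (symmetric positive definite), $M^{1/2}$ its symmetric square root, and $B_j=\gamma_jp_j\,M^{1/2}_{:,j}(M^{1/2}_{:,j})^\top$. $\|\cdot\|$ is the Euclidean norm. *)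

theory Defs
  imports "HOL-Analysis.Analysis"
begin

definition proper_fun :: "(real \<Rightarrow> ereal) \<Rightarrow> bool" where
  "proper_fun g \<longleftrightarrow> (\<forall>t. g t \<noteq> -\<infinity>) \<and> (\<exists>t. g t \<noteq> \<infinity>)"

definition closed_fun :: "(real \<Rightarrow> ereal) \<Rightarrow> bool" where
  "closed_fun g \<longleftrightarrow>
     (\<forall>t X. X \<longlonglongrightarrow> t \<longrightarrow> g t \<le> liminf (\<lambda>n. g (X n)))"

definition convex_efun :: "(real \<Rightarrow> ereal) \<Rightarrow> bool" where
  "convex_efun g \<longleftrightarrow>
     (\<forall>x y a. 0 \<le> a \<and> a \<le> 1 \<longrightarrow>
        g ((1 - a) * x + a * y) \<le> ereal (1 - a) * g x + ereal a * g y)"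

definition subdiff :: "(real \<Rightarrow> ereal) \<Rightarrow> real \<Rightarrow> real set" where
  "subdiff g x = {v. \<forall>y. g x + ereal (v * (y - x)) \<le> g y}"

definition prox :: "real \<Rightarrow> (real \<Rightarrow> ereal) \<Rightarrow> real \<Rightarrow> real" where
  "prox \<gamma> g z = (THE y. \<forall>w. g y + ereal ((y - z)^2 / (2 * \<gamma>))
                              \<le> g w + ereal ((w - z)^2 / (2 * \<gamma>)))"

definition C2_near :: "(real \<Rightarrow> ereal) \<Rightarrow> real \<Rightarrow> bool" where
  "C2_near g t0 \<longleftrightarrow> (\<exists>e>0. \<exists>h h1 h2.
      (\<forall>t\<in>ball t0 e. g t = ereal (h t) \<and> (h has_real_derivative h1 t) (at t)
                       \<and> (h1 has_real_derivative h2 t) (at t))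
      \<and> continuous_on (ball t0 e) h2)"

end

theory Submission
  imports Defs
begin

lemma diag_le_lip:
  fixes grad :: "real^'n \<Rightarrow> real^'n" and H :: "real^'n^'n"
  assumes d: "(grad has_derivative (\<lambda>h. H *v h)) (at xs)"
    and lip: "\<And>y t. \<bar>grad (y + t *\<^sub>R axis j 1) $ j - grad y $ j\<bar> \<le> Lj * \<bar>t\<bar>"
  shows "H $ j $ j \<le> Lj"
proof -
  define \<phi> where "\<phi> t = grad (xs + t *\<^sub>R axis j 1) $ j" for t :: real
  have d1: "((\<lambda>t::real. xs + t *\<^sub>R axis j (1::real)) has_derivative (\<lambda>t. t *\<^sub>R axis j 1)) (at 0)"
    by (auto intro!: derivative_eq_intros)
  have d2: "(grad has_derivative (\<lambda>h. H *v h)) (at (xs + 0 *\<^sub>R axis j 1))" using d by simp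
  have "((\<lambda>t. grad (xs + t *\<^sub>R axis j 1)) has_derivative (\<lambda>t. H *v (t *\<^sub>R axis j 1))) (at 0)"
    using diff_chain_at[OF d1 d2] by (simp add: o_def)
  then have "(\<phi> has_derivative (\<lambda>t. (H *v (t *\<^sub>R axis j 1)) $ j)) (at 0)"
    unfolding \<phi>_def by (rule bounded_linear.has_derivative[OF bounded_linear_vec_nth])
  moreover have "(\<lambda>t. (H *v (t *\<^sub>R axis j 1)) $ j) = (\<lambda>t. H $ j $ j * t)"
    by (auto simp: matrix_vector_mul_component inner_axis mult.commute)
  ultimately have "(\<phi> has_real_derivative H $ j $ j) (at 0)"
    by (simp add: has_field_derivative_def)
  then have "((\<lambda>t. (\<phi> t - \<phi> 0) / (t - 0)) \<longlongrightarrow> H $ j $ j) (at 0)"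
    using DERIV_def by (simp add: has_field_derivative_iff)
  moreover have "eventually (\<lambda>t. (\<phi> t - \<phi> 0) / (t - 0) \<le> Lj) (at (0::real))"
  proof (rule eventually_at_topological[THEN iffD2] , intro exI[of _ UNIV] conjI ballI impI)
    fix t :: real assume "t \<noteq> 0"
    have "\<bar>\<phi> t - \<phi> 0\<bar> \<le> Lj * \<bar>t\<bar>" unfolding \<phi>_def using lip[of xs t] by simp
    then have "\<bar>(\<phi> t - \<phi> 0) / t\<bar> \<le> Lj" using \<open>t \<noteq> 0\<close>
      by (simp add: abs_divide divide_le_eq)
    then show "(\<phi> t - \<phi> 0) / (t - 0) \<le> Lj" by (metis abs_le_D1 diff_zero)
  qed auto
  ultimately show ?thesis
    by (intro tendsto_upperbound) auto
qed

theorem lemma7: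
  fixes f :: "real^'n \<Rightarrow> real"
    and grad :: "real^'n \<Rightarrow> real^'n"
    and Hf :: "real^'n \<Rightarrow> real^'n^'n"
    and g :: "'n \<Rightarrow> real \<Rightarrow> ereal"
    and xs :: "real^'n"
    and L \<gamma> p :: "'n \<Rightarrow> real"
    and S :: "'n set"
    and R :: "real^'n^'n"
    and j :: 'n
    and x :: "real^'n"
  assumes f_convex: "convex_on UNIV f"
    and f_grad: "\<And>y. (f has_derivative (\<lambda>h. grad y \<bullet> h)) (at y)"
    and grad_lipschitz: "\<exists>K. \<forall>y z. norm (grad y - grad z) \<le> K * dist y z"
    and g_proper: "\<And>i. proper_fun (g i)"
    and g_closed: "\<And>i. closed_fun (g i)"
    and g_convex: "\<And>i. convex_efun (g i)"
    and xs_min: "\<And>y. ereal (f xs) + (\<Sum>i\<in>UNIV. g i (xs $ i))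
                      \<le> ereal (f y) + (\<Sum>i\<in>UNIV. g i (y $ i))"
    and S_def: "S = {i. \<exists>v. subdiff (g i) (xs $ i) = {v}}"
    and g_C2: "\<And>i. i \<in> S \<Longrightarrow> C2_near (g i) (xs $ i)"
    and f_C2: "\<exists>e>0. (\<forall>y\<in>ball xs e. (grad has_derivative (\<lambda>h. Hf y *v h)) (at y))
                       \<and> continuous_on (ball xs e) Hf"
    and H_SS_pd: "\<And>v. (\<forall>i. i \<notin> S \<longrightarrow> v $ i = 0) \<Longrightarrow> v \<noteq> 0 \<Longrightarrow>
                       v \<bullet> (Hf xs *v v) > 0"
    and L_lip: "\<And>i y t. L i \<ge> 0 \<and>
                  \<bar>grad (y + t *\<^sub>R axis i 1) $ i - grad y $ i\<bar> \<le> L i * \<bar>t\<bar>"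
    and step: "\<And>i. 0 < \<gamma> i \<and> \<gamma> i * L i \<le> 1"
    and p_deriv: "\<And>i. i \<in> S \<Longrightarrow>
        (prox (\<gamma> i) (g i) has_real_derivative p i) (at (xs $ i - \<gamma> i * grad xs $ i))"
    and p_pos: "\<And>i. i \<in> S \<Longrightarrow> p i > 0"
    and R_supp: "\<And>i k. i \<notin> S \<or> k \<notin> S \<Longrightarrow> R $ i $ k = 0"
    and R_sym: "transpose R = R"
    and R_psd: "\<And>v. v \<bullet> (R *v v) \<ge> 0"
    and R_sqrt: "R ** R = (\<chi> i k. if i \<in> S \<and> k \<in> S then
                     Hf xs $ i $ k + (if i = k then 1 / (\<gamma> i * p i) - 1 / \<gamma> i else 0)
                   else 0)"
    and j_S: "j \<in> S"
    and x_S: "\<And>i. i \<notin> S \<Longrightarrow> x $ i = 0"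
    and norm_eq: "norm (x - (\<gamma> j * p j) *\<^sub>R ((\<chi> a b. R $ a $ j * R $ b $ j) *v x)) = norm x"
  shows "x \<in> orthogonal_comp (span {(\<chi> i. R $ i $ j)})"
proof -
  define m where "m = (\<chi> i. R $ i $ j)"
  define c where "c = \<gamma> j * p j"
  define H where "H = Hf xs $ j $ j"
  have gp: "\<gamma> j > 0" "p j > 0" using step p_pos j_S by auto
  have cpos: "c > 0" unfolding c_def using gp by simp
  obtain e where e: "e > 0" "\<forall>y\<in>ball xs e. (grad has_derivative (\<lambda>h. Hf y *v h)) (at y)"
    using f_C2 by blast
  have HL: "H \<le> L j" unfolding H_def
    by (rule diag_le_lip[of grad "Hf xs" xs j]) (use e L_lip in auto)
  have Bx: "(\<chi> a b. R $ a $ j * R $ b $ j) *v x = (m \<bullet> x) *\<^sub>R m"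
    by (simp add: vec_eq_iff matrix_vector_mult_def m_def inner_vec_def sum_distrib_left mult_ac)
  have "m \<bullet> m = (R ** R) $ j $ j"
  proof -
    have "\<And>k. R $ j $ k = R $ k $ j" using R_sym by (metis transpose_def vec_lambda_beta)
    then show ?thesis by (simp add: m_def inner_vec_def matrix_matrix_mult_def power2_eq_square)
  qed
  also have "\<dots> = H + 1 / (\<gamma> j * p j) - 1 / \<gamma> j" using R_sqrt j_S by (simp add: H_def)
  finally have mm: "m \<bullet> m = H + 1 / (\<gamma> j * p j) - 1 / \<gamma> j" .
  have cmm: "c * (m \<bullet> m) = \<gamma> j * p j * H + 1 - p j"
    unfolding mm c_def using gp by (simp add: field_simps)
  have "\<gamma> j * H \<le> 1" using HL step[of j] gp
    by (smt (verit) mult_left_mono)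
  then have "p j * (\<gamma> j * H) \<le> p j" using gp by (simp add: mult_left_le)
  moreover have "\<gamma> j * p j * H = p j * (\<gamma> j * H)" by simp
  ultimately have lt: "c * (m \<bullet> m) < 2" unfolding cmm using gp by linarith
  have "norm (x - c *\<^sub>R ((m \<bullet> x) *\<^sub>R m))^2 = norm x ^ 2"
    using norm_eq Bx unfolding c_def by simp
  then have "(x - (c * (m \<bullet> x)) *\<^sub>R m) \<bullet> (x - (c * (m \<bullet> x)) *\<^sub>R m) = x \<bullet> x"
    by (simp add: power2_norm_eq_inner)
  moreover have "(x - (c * (m \<bullet> x)) *\<^sub>R m) \<bullet> (x - (c * (m \<bullet> x)) *\<^sub>R m)
     = x \<bullet> x - 2 * c * (m \<bullet> x)^2 + c^2 * (m \<bullet> x)^2 * (m \<bullet> m)"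
    unfolding inner_diff_left inner_diff_right inner_scaleR_left inner_scaleR_right inner_commute[of x m]
    by (simp add: power2_eq_square algebra_simps)
  ultimately have "x \<bullet> x - 2 * c * (m \<bullet> x)^2 + c^2 * (m \<bullet> x)^2 * (m \<bullet> m) = x \<bullet> x"
    by simp
  then have "c * (m \<bullet> x)^2 * (c * (m \<bullet> m) - 2) = 0"
    by (simp add: power2_eq_square right_diff_distrib)
  then have mx: "m \<bullet> x = 0" using cpos lt by simp
  have "x \<in> orthogonal_comp (span {m})"
    using mx by (auto simp: orthogonal_comp_def orthogonal_def span_singleton inner_commute)
  then show ?thesis unfolding m_def .
qed

end
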